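(* Let $\mathbf P\in\mathbb{R}^{n\times n}$ be symmetric positive definite and $\mathbf c\in\mathbb{R}^n$, and let $\ell_{\mathbf c,\mathbf P}:\mathcal{I}_{\mathbf P}\to\mathbb{R}$ be the function defined below. Then (1) $\ell_{\mathbf c,\mathbf P}$ is concave on $\mathcal{I}_{\mathbf P}$; and (2) $\ell_{\mathbf c,\mathbf P}(\beta)<0$ for all $\beta\in\mathcal{I}_{\mathbf P}$.
   Context: Let $\mathbf P=\mathbf V\mathbf D\mathbf V^\top$ be a spectral decomposition with $\mathbf V$ orthogonal and $\mathbf D$ diagonal with diagonal entries $\lambda_i=D_{ii}>0$, $i=1,\dots,n$. Let $\bar{\mathbf c}=\mathbf V^\top\mathbf c$ and $S(\bar{\mathbf c})=\{i\in\{1,\dots,n\}:\bar c_i\neq 0\}$. Let $\lambda_{\min}(\mathbf P)$ be the smallest eigenvalue of $\mathbf P$. Define the interval $\mathcal{I}_{\mathbf P}=(\lambda_{\min}(\mathbf P)^{-1},\infty)$ if there is $i\in S(\bar{\mathbf c})$ with $\lambda_i=\lambda_{\min}(\mathbf P)$, and $\mathcal{I}_{\mathbf P}=[\lambda_{\min}(\mathbf P)^{-1},\infty)$ otherwise. Define $$\ell_{\mathbf c,\mathbf P}(\beta)=-\beta-\sum_{i\in S(\bar{\mathbf c})}\bar c_i^2\,\frac{\lambda_i\beta}{\lambda_i\beta-1},\qquad \beta\in\mathcal{I}_{\mathbf P}.$$ *)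

theory Defs
  imports "HOL-Analysis.Analysis"
begin

definition lambda_min :: "real^'n^'n \<Rightarrow> real" where
  "lambda_min P = Min {l. \<exists>v. v \<noteq> 0 \<and> P *v v = l *\<^sub>R v}"

definition supp_cbar :: "real^'n^'n \<Rightarrow> real^'n \<Rightarrow> 'n set" where
  "supp_cbar V c = {i. (transpose V *v c) $ i \<noteq> 0}"

definition I_P :: "real^'n^'n \<Rightarrow> real^'n^'n \<Rightarrow> real^'n^'n \<Rightarrow> real^'n \<Rightarrow> real set" where
  "I_P P V D c = (if \<exists>i\<in>supp_cbar V c. D $ i $ i = lambda_min P
                  then {inverse (lambda_min P)<..} else {inverse (lambda_min P)..})"

definition ell :: "real^'n^'n \<Rightarrow> real^'n^'n \<Rightarrow> real^'n \<Rightarrow> real \<Rightarrow> real" where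
  "ell V D c \<beta> = - \<beta> - (\<Sum>i\<in>supp_cbar V c.
       ((transpose V *v c) $ i)\<^sup>2 * ((D $ i $ i * \<beta>) / (D $ i $ i * \<beta> - 1)))"

end

theory Submission
  imports Defs
begin

lemma diag_mult_comp:
  fixes D :: "real^'n^'n"
  assumes diag: "\<forall>i j. i \<noteq> j \<longrightarrow> D $ i $ j = 0"
  shows "(D *v w) $ i = D $ i $ i * w $ i"
proof -
  have "(D *v w) $ i = (\<Sum>j\<in>UNIV. D $ i $ j * w $ j)"
    by (simp add: matrix_vector_mult_def)
  also have "\<dots> = (\<Sum>j\<in>UNIV. if j = i then D $ i $ i * w $ i else 0)"
    by (rule sum.cong) (use diag in auto)
  also have "\<dots> = D $ i $ i * w $ i" by simp
  finally show ?thesis .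
qed

lemma convex_on_sum_fun:
  fixes g :: "'i \<Rightarrow> real \<Rightarrow> real"
  assumes "finite F" "convex S" "\<And>i. i \<in> F \<Longrightarrow> convex_on S (g i)"
  shows "convex_on S (\<lambda>x. \<Sum>i\<in>F. g i x)"
  using assms
proof (induction F rule: finite_induct)
  case empty
  then show ?case by (simp add: convex_on_const)
next
  case (insert a F)
  then show ?case by (auto intro!: convex_on_add)
qed

lemma term_convex:
  fixes l :: real
  assumes l: "l > 0"
  shows "convex_on {inverse l<..} (\<lambda>b. (l * b) / (l * b - 1))"
proof (rule convex_on_realI[where f' = "\<lambda>b. - l / (l * b - 1)^2"])
  show "connected {inverse l<..}" by simp
next
  fix x assume x: "x \<in> {inverse l<..}"
  then have "l * x > 1" using l by (simp add: field_simps)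
  then have ne: "l * x - 1 \<noteq> 0" by simp
  show "((\<lambda>b. (l * b) / (l * b - 1)) has_real_derivative - l / (l * x - 1)^2) (at x)"
    by (rule derivative_eq_intros refl | use ne in \<open>simp_all add: field_simps power2_eq_square\<close>)+
next
  fix x y assume x: "x \<in> {inverse l<..}" and y: "y \<in> {inverse l<..}" and xy: "x \<le> y"
  have a: "l * x - 1 > 0" using x l by (simp add: field_simps)
  have b: "l * x - 1 \<le> l * y - 1" using xy l by (simp add: mult_left_mono)
  have "(l * x - 1)^2 \<le> (l * y - 1)^2" using a b by (intro power_mono) auto
  moreover have "(l * x - 1)^2 > 0" using a by simp
  moreover have "(l * y - 1)^2 > 0" using a b by simp
  ultimately have "l / (l * y - 1)^2 \<le> l / (l * x - 1)^2"
    using l by (intro divide_left_mono) auto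
  then show "- l / (l * x - 1)^2 \<le> - l / (l * y - 1)^2" by simp
qed

theorem lemma2:
  fixes P V D :: "real^'n^'n" and c :: "real^'n"
  assumes sym: "transpose P = P"
    and posdef: "\<forall>x. x \<noteq> 0 \<longrightarrow> x \<bullet> (P *v x) > 0"
    and orth: "orthogonal_matrix V"
    and diag: "\<forall>i j. i \<noteq> j \<longrightarrow> D $ i $ j = 0"
    and decomp: "P = V ** D ** transpose V"
    and pos: "\<forall>i. D $ i $ i > 0"
  shows "concave_on (I_P P V D c) (ell V D c)
         \<and> (\<forall>\<beta>\<in>I_P P V D c. ell V D c \<beta> < 0)"
proof -
  define E where "E = {l. \<exists>v. v \<noteq> 0 \<and> P *v v = l *\<^sub>R v}"
  have VtV: "transpose V ** V = mat 1" and VVt: "V ** transpose V = mat 1"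
    using orth by (auto simp: orthogonal_matrix_def)
  have Esub: "E \<subseteq> range (\<lambda>i. D $ i $ i)"
  proof
    fix l assume "l \<in> E"
    then obtain v where v: "v \<noteq> 0" "P *v v = l *\<^sub>R v" by (auto simp: E_def)
    define w where "w = transpose V *v v"
    have "V *v w = (V ** transpose V) *v v" by (simp only: w_def matrix_vector_mul_assoc)
    then have "V *v w = v" by (simp add: VVt)
    then have "w \<noteq> 0" using v by auto
    then obtain i where i: "w $ i \<noteq> 0" by (auto simp: vec_eq_iff)
    have "transpose V *v (P *v v) = (transpose V ** V ** D ** transpose V) *v v"
      unfolding decomp by (simp only: matrix_vector_mul_assoc matrix_mul_assoc)
    also have "\<dots> = D *v w"
      unfolding w_def by (simp only: VtV matrix_mul_lid matrix_vector_mul_assoc matrix_mul_assoc)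
    finally have "transpose V *v (P *v v) = D *v w" .
    then have "D *v w = l *\<^sub>R w" using v(2) by (simp add: w_def matrix_vector_mult_scaleR)
    then have "(D *v w) $ i = l * w $ i" by simp
    then have "D $ i $ i * w $ i = l * w $ i" by (simp add: diag_mult_comp[OF diag])
    then have "l = D $ i $ i" using i by simp
    then show "l \<in> range (\<lambda>i. D $ i $ i)" by simp
  qed
  have Ein: "D $ i $ i \<in> E" for i
  proof -
    define e :: "real^'n" where "e = axis i 1"
    define v where "v = V *v e"
    have "transpose V *v v = (transpose V ** V) *v e" by (simp only: v_def matrix_vector_mul_assoc)
    then have "transpose V *v v = e" by (simp add: VtV)
    then have "v \<noteq> 0" by (auto simp: e_def)
    have "D *v e = D $ i $ i *\<^sub>R e"
      by (simp add: vec_eq_iff diag_mult_comp[OF diag] e_def axis_def)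
    have "V ** D ** transpose V ** V = V ** D ** (transpose V ** V)"
      by (simp only: matrix_mul_assoc)
    then have "V ** D ** transpose V ** V = V ** D" by (simp add: VtV)
    then have "P *v v = V *v (D *v e)"
      unfolding decomp v_def by (simp only: matrix_vector_mul_assoc)
    also have "\<dots> = D $ i $ i *\<^sub>R v"
      using \<open>D *v e = _\<close> by (simp add: v_def matrix_vector_mult_scaleR)
    finally show ?thesis using \<open>v \<noteq> 0\<close> by (auto simp: E_def)
  qed
  have Epos: "l > 0" if lE: "l \<in> E" for l
  proof -
    obtain v where v: "v \<noteq> 0" "P *v v = l *\<^sub>R v" using lE by (auto simp: E_def)
    have "v \<bullet> (P *v v) > 0" using posdef v by auto
    then have "l * (v \<bullet> v) > 0" using v by simp
    moreover have "v \<bullet> v > 0" using v by simp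
    ultimately show ?thesis by (simp add: zero_less_mult_iff)
  qed
  have finE: "finite E" by (rule finite_subset[OF Esub]) simp
  have neE: "E \<noteq> {}" using Ein by blast
  have lm: "lambda_min P = Min E" by (simp add: lambda_min_def E_def)
  have lmpos: "lambda_min P > 0" unfolding lm using Min_in[OF finE neE] Epos by blast
  have lmle: "lambda_min P \<le> D $ i $ i" for i unfolding lm using Min_le[OF finE Ein] .
  define S where "S = supp_cbar V c"
  define cb where "cb = transpose V *v c"
  have key: "\<beta> > inverse (D $ i $ i)" if "\<beta> \<in> I_P P V D c" "i \<in> S" for \<beta> i
  proof (cases "D $ i $ i = lambda_min P")
    case True
    then have "I_P P V D c = {inverse (lambda_min P)<..}"
      using that(2) by (auto simp: I_P_def S_def)
    then show ?thesis using that True by simp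
  next
    case False
    then have lt: "lambda_min P < D $ i $ i" using lmle[of i] by simp
    have "\<beta> \<ge> inverse (lambda_min P)" using that by (auto simp: I_P_def split: if_splits)
    moreover have "inverse (D $ i $ i) < inverse (lambda_min P)"
      using lt lmpos by (simp add: less_imp_inverse_less)
    ultimately show ?thesis by simp
  qed
  have Ipos: "\<beta> > 0" if "\<beta> \<in> I_P P V D c" for \<beta>
  proof -
    have "\<beta> \<ge> inverse (lambda_min P)" using that by (auto simp: I_P_def split: if_splits)
    then show ?thesis using lmpos by (smt (verit) positive_imp_inverse_positive)
  qed
  have cvxI: "convex (I_P P V D c)" by (simp add: I_P_def)
  have ellf: "ell V D c = (\<lambda>\<beta>. - \<beta> - (\<Sum>i\<in>S. (cb $ i)\<^sup>2 * ((D $ i $ i * \<beta>) / (D $ i $ i * \<beta> - 1))))"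
    by (simp add: fun_eq_iff ell_def S_def cb_def)
  have part1: "concave_on (I_P P V D c) (ell V D c)"
    unfolding concave_on_def ellf
  proof -
    have "convex_on (I_P P V D c) (\<lambda>\<beta>. \<beta> + (\<Sum>i\<in>S. (cb $ i)\<^sup>2 * ((D $ i $ i * \<beta>) / (D $ i $ i * \<beta> - 1))))"
    proof (intro convex_on_add convex_on_sum_fun)
      show "convex_on (I_P P V D c) (\<lambda>x. x)"
        using cvxI by (simp add: convex_on_def)
      show "finite S" by simp
      show "convex (I_P P V D c)" by (rule cvxI)
      fix i assume i: "i \<in> S"
      have "convex_on (I_P P V D c) (\<lambda>b. (D $ i $ i * b) / (D $ i $ i * b - 1))"
        using term_convex[of "D $ i $ i"] pos key[OF _ i] cvxI
        by (intro convex_on_subset[OF term_convex[of "D $ i $ i"]]) auto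
      then show "convex_on (I_P P V D c) (\<lambda>x. (cb $ i)\<^sup>2 * ((D $ i $ i * x) / (D $ i $ i * x - 1)))"
        by (intro convex_on_cmul) auto
    qed
    then show "convex_on (I_P P V D c) (\<lambda>x. - (- x - (\<Sum>i\<in>S. (cb $ i)\<^sup>2 * ((D $ i $ i * x) / (D $ i $ i * x - 1)))))"
      by (simp add: add.commute)
  qed
  have part2: "ell V D c \<beta> < 0" if b: "\<beta> \<in> I_P P V D c" for \<beta>
  proof -
    have "(\<Sum>i\<in>S. (cb $ i)\<^sup>2 * ((D $ i $ i * \<beta>) / (D $ i $ i * \<beta> - 1))) \<ge> 0"
    proof (intro sum_nonneg mult_nonneg_nonneg)
      fix i assume i: "i \<in> S"
      have "D $ i $ i * \<beta> > 1" using key[OF b i] pos by (simp add: field_simps)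
      then show "0 \<le> (D $ i $ i * \<beta>) / (D $ i $ i * \<beta> - 1)" by simp
    qed simp
    then show ?thesis using Ipos[OF b] by (simp add: ellf)
  qed
  show ?thesis using part1 part2 by blast
qed

end
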